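(* Let $T\in\mathcal{B}(V)$ and $s\in\rho_S(T)$ such that $\|T-\mathrm{Re}[s]\mathcal{I}\|<|s-\mathrm{Re}[s]|$. Then $$S^{-1}(s,T)=\sum_{n\ge0}(T-\mathrm{Re}[s]\mathcal{I})^n\,(s-\mathrm{Re}[s])^{-n-1},$$ the series converging in operator norm.
   Context: $V$ is a bilateral quaternionic Banach space: a real Banach space which is both a left and a right $\mathbb{H}$-vector space with $(av)b=a(vb)$ and $\|av\|=\|va\|=|a|\|v\|$. $\mathcal{B}(V)$ is the space of bounded right-linear operators on $V$; products denote composition, $\mathcal{I}$ is the identity. For $a\in\mathbb{H}$, $a\mathcal{I}$ is $v\mapsto av$, $aT:=(a\mathcal{I})T$, $Ta:=T(a\mathcal{I})$ (so $A^n b$ means $v\mapsto A^n(bv)$). $\sigma_S(T)=\{s: T^2-2\mathrm{Re}[s]T+|s|^2\mathcal{I}$ not invertible in $\mathcal{B}(V)\}$, $\rho_S(T)=\mathbb{H}\setminus\sigma_S(T)$, and for $s\in\rho_S(T)$, $S^{-1}(s,T)=-(T^2-2\mathrm{Re}[s]T+|s|^2\mathcal{I})^{-1}(T-\bar s\mathcal{I})$. *)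

theory Defs
  imports "HOL-Analysis.Analysis"
begin

datatype quat = Quat (qRe: real) (qI: real) (qJ: real) (qK: real)

lemma quat_eq_iff: "x = y \<longleftrightarrow> qRe x = qRe y \<and> qI x = qI y \<and> qJ x = qJ y \<and> qK x = qK y"
  by (cases x; cases y) auto

lemma quat_eqI [intro?]: "qRe x = qRe y \<Longrightarrow> qI x = qI y \<Longrightarrow> qJ x = qJ y \<Longrightarrow> qK x = qK y \<Longrightarrow> x = y"
  by (simp add: quat_eq_iff)

instantiation quat :: ab_group_add
begin
definition "0 = Quat 0 0 0 0"
definition "x + y = Quat (qRe x + qRe y) (qI x + qI y) (qJ x + qJ y) (qK x + qK y)"
definition "- x = Quat (- qRe x) (- qI x) (- qJ x) (- qK x)"
definition "x - y = Quat (qRe x - qRe y) (qI x - qI y) (qJ x - qJ y) (qK x - qK y)"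
instance
  by standard (simp_all add: zero_quat_def plus_quat_def uminus_quat_def minus_quat_def quat_eq_iff)
end

lemma quat_add_sel [simp]:
  "qRe (x + y) = qRe x + qRe y" "qI (x + y) = qI x + qI y"
  "qJ (x + y) = qJ x + qJ y" "qK (x + y) = qK x + qK y"
  "qRe (x - y) = qRe x - qRe y" "qI (x - y) = qI x - qI y"
  "qJ (x - y) = qJ x - qJ y" "qK (x - y) = qK x - qK y"
  "qRe (- x) = - qRe x" "qI (- x) = - qI x" "qJ (- x) = - qJ x" "qK (- x) = - qK x"
  "qRe 0 = 0" "qI 0 = 0" "qJ 0 = 0" "qK 0 = 0"
  by (simp_all add: zero_quat_def plus_quat_def uminus_quat_def minus_quat_def)

instantiation quat :: ring_1
begin
definition "(1::quat) = Quat 1 0 0 0"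
definition "(x::quat) * y = Quat
  (qRe x * qRe y - qI x * qI y - qJ x * qJ y - qK x * qK y)
  (qRe x * qI y + qI x * qRe y + qJ x * qK y - qK x * qJ y)
  (qRe x * qJ y - qI x * qK y + qJ x * qRe y + qK x * qI y)
  (qRe x * qK y + qI x * qJ y - qJ x * qI y + qK x * qRe y)"
instance
proof
  fix a b c :: quat
  show "a * b * c = a * (b * c)" by (simp add: times_quat_def quat_eq_iff algebra_simps)
  show "1 * a = a" by (simp add: times_quat_def one_quat_def quat_eq_iff)
  show "a * 1 = a" by (simp add: times_quat_def one_quat_def quat_eq_iff)
  show "(a + b) * c = a * c + b * c" by (simp add: times_quat_def quat_eq_iff algebra_simps)
  show "a * (b + c) = a * b + a * c" by (simp add: times_quat_def quat_eq_iff algebra_simps)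
  show "(0::quat) \<noteq> 1" by (simp add: one_quat_def quat_eq_iff)
qed
end

definition qinv :: "quat \<Rightarrow> quat" where
  "qinv x = (let n = (qRe x)\<^sup>2 + (qI x)\<^sup>2 + (qJ x)\<^sup>2 + (qK x)\<^sup>2 in
  Quat (qRe x / n) (- qI x / n) (- qJ x / n) (- qK x / n))"

instantiation quat :: division_ring
begin
definition "inverse (x::quat) = qinv x"
definition "divide (x::quat) y = x * qinv y"

lemma quat_nz_sumsq:
  assumes "(x::quat) \<noteq> 0"
  shows "(qRe x)\<^sup>2 + (qI x)\<^sup>2 + (qJ x)\<^sup>2 + (qK x)\<^sup>2 \<noteq> 0"
  using assms by (simp add: quat_eq_iff add_nonneg_eq_0_iff)

lemma quat_inv_left: "(a::quat) \<noteq> 0 \<Longrightarrow> times (qinv a) a = 1"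
proof -
  assume "a \<noteq> 0"
  define N where "N = (qRe a)\<^sup>2 + (qI a)\<^sup>2 + (qJ a)\<^sup>2 + (qK a)\<^sup>2"
  have N0: "N \<noteq> 0" using quat_nz_sumsq[OF \<open>a \<noteq> 0\<close>] by (simp add: N_def)
  have NN: "qRe a * qRe a + qI a * qI a + qJ a * qJ a + qK a * qK a = N"
    by (simp add: N_def power2_eq_square)
  show ?thesis
    unfolding qinv_def Let_def N_def[symmetric] times_quat_def one_quat_def quat_eq_iff
    using N0 NN by (simp add: divide_simps)
qed

lemma quat_inv_right: "(a::quat) \<noteq> 0 \<Longrightarrow> times a (qinv a) = 1"
proof -
  assume "a \<noteq> 0"
  define N where "N = (qRe a)\<^sup>2 + (qI a)\<^sup>2 + (qJ a)\<^sup>2 + (qK a)\<^sup>2"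
  have N0: "N \<noteq> 0" using quat_nz_sumsq[OF \<open>a \<noteq> 0\<close>] by (simp add: N_def)
  have NN: "qRe a * qRe a + qI a * qI a + qJ a * qJ a + qK a * qK a = N"
    by (simp add: N_def power2_eq_square)
  show ?thesis
    unfolding qinv_def Let_def N_def[symmetric] times_quat_def one_quat_def quat_eq_iff
    using N0 NN by (simp add: divide_simps)
qed

instance
  by standard (simp_all add: inverse_quat_def divide_quat_def quat_inv_left quat_inv_right,
      simp add: qinv_def quat_eq_iff Let_def)
end

instantiation quat :: real_div_algebra
begin
definition "scaleR r (x::quat) = Quat (r * qRe x) (r * qI x) (r * qJ x) (r * qK x)"
instance
proof
  fix r s :: real and x y :: quat
  show "scaleR r (x + y) = scaleR r x + scaleR r y"
    by (simp add: scaleR_quat_def quat_eq_iff algebra_simps)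
  show "scaleR (r + s) x = scaleR r x + scaleR s x"
    by (simp add: scaleR_quat_def quat_eq_iff algebra_simps)
  show "scaleR r (scaleR s x) = scaleR (r * s) x"
    by (simp add: scaleR_quat_def quat_eq_iff algebra_simps)
  show "scaleR 1 x = x" by (simp add: scaleR_quat_def quat_eq_iff)
  show "scaleR r x * y = scaleR r (x * y)"
    by (simp add: scaleR_quat_def times_quat_def quat_eq_iff algebra_simps)
  show "x * scaleR r y = scaleR r (x * y)"
    by (simp add: scaleR_quat_def times_quat_def quat_eq_iff algebra_simps)
qed
end

instantiation quat :: real_normed_div_algebra
begin
definition "norm (x::quat) = sqrt ((qRe x)\<^sup>2 + (qI x)\<^sup>2 + (qJ x)\<^sup>2 + (qK x)\<^sup>2)"
definition quat_sgn_def: "sgn (x::quat) = x /\<^sub>R norm x"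
definition dist_quat_def: "dist (x::quat) y = norm (x - y)"
definition uniformity_quat_def [code del]:
  "(uniformity :: (quat \<times> quat) filter) = (INF e\<in>{0 <..}. principal {(x, y). dist x y < e})"
definition open_quat_def [code del]:
  "open (U :: quat set) \<longleftrightarrow> (\<forall>x\<in>U. eventually (\<lambda>(x', y). x' = x \<longrightarrow> y \<in> U) uniformity)"

lemma norm_quat_tuple: "norm (x::quat) = norm (qRe x, qI x, qJ x, qK x)"
  by (simp add: norm_quat_def norm_Pair add.assoc)

instance
proof
  fix r :: real and x y :: quat
  show "(norm x = 0) = (x = 0)"
    by (simp add: norm_quat_def quat_eq_iff add_nonneg_eq_0_iff)
  show "norm (x + y) \<le> norm x + norm y"
    using norm_triangle_ineq[of "(qRe x, qI x, qJ x, qK x)" "(qRe y, qI y, qJ y, qK y)"]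
    by (simp add: norm_quat_tuple)
  show "norm (scaleR r x) = \<bar>r\<bar> * norm x"
    by (simp add: norm_quat_def scaleR_quat_def power_mult_distrib
        distrib_left [symmetric] real_sqrt_mult)
  show "norm (x * y) = norm x * norm y"
    by (simp add: norm_quat_def times_quat_def real_sqrt_mult [symmetric]
        power2_eq_square algebra_simps)
qed (rule quat_sgn_def dist_quat_def open_quat_def uniformity_quat_def)+
end

definition qcnj :: "quat \<Rightarrow> quat" where
  "qcnj x = Quat (qRe x) (- qI x) (- qJ x) (- qK x)"

text \<open>A real Banach space of type v together with a left action lm (a v = lm a v)
  and a right action rm (v a = rm v a) of the quaternions, compatible with the real
  structure, with (a v) b = a (v b) and norm (a v) = norm (v a) = |a| norm v.\<close>

definition bilateral_qbanach :: "(quat \<Rightarrow> 'v::banach \<Rightarrow> 'v) \<Rightarrow> ('v \<Rightarrow> quat \<Rightarrow> 'v) \<Rightarrow> bool" where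
  "bilateral_qbanach lm rm \<longleftrightarrow>
     (\<forall>a v w. lm a (v + w) = lm a v + lm a w) \<and>
     (\<forall>a b v. lm (a + b) v = lm a v + lm b v) \<and>
     (\<forall>a b v. lm (a * b) v = lm a (lm b v)) \<and>
     (\<forall>r v. lm (of_real r) v = r *\<^sub>R v) \<and>
     (\<forall>a v w. rm (v + w) a = rm v a + rm w a) \<and>
     (\<forall>a b v. rm v (a + b) = rm v a + rm v b) \<and>
     (\<forall>a b v. rm v (a * b) = rm (rm v a) b) \<and>
     (\<forall>r v. rm v (of_real r) = r *\<^sub>R v) \<and>
     (\<forall>a b v. rm (lm a v) b = lm a (rm v b)) \<and>
     (\<forall>a v. norm (lm a v) = norm a * norm v) \<and>
     (\<forall>a v. norm (rm v a) = norm a * norm v)"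

text \<open>Bounded right-linear operators, i.e. the elements of B(V).\<close>
definition qbop :: "('v::real_normed_vector \<Rightarrow> quat \<Rightarrow> 'v) \<Rightarrow> ('v \<Rightarrow> 'v) \<Rightarrow> bool" where
  "qbop rm T \<longleftrightarrow> bounded_linear T \<and> (\<forall>v a. T (rm v a) = rm (T v) a)"

definition Qop :: "quat \<Rightarrow> ('v::real_normed_vector \<Rightarrow> 'v) \<Rightarrow> 'v \<Rightarrow> 'v" where
  "Qop s T = (\<lambda>v. T (T v) - (2 * qRe s) *\<^sub>R T v + (norm s)\<^sup>2 *\<^sub>R v)"

definition qinvertible :: "('v::real_normed_vector \<Rightarrow> quat \<Rightarrow> 'v) \<Rightarrow> ('v \<Rightarrow> 'v) \<Rightarrow> bool" where
  "qinvertible rm A \<longleftrightarrow> (\<exists>B. qbop rm B \<and> B \<circ> A = id \<and> A \<circ> B = id)"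

definition S_spectrum :: "('v::real_normed_vector \<Rightarrow> quat \<Rightarrow> 'v) \<Rightarrow> ('v \<Rightarrow> 'v) \<Rightarrow> quat set" where
  "S_spectrum rm T = {s. \<not> qinvertible rm (Qop s T)}"

definition S_resolvent_set :: "('v::real_normed_vector \<Rightarrow> quat \<Rightarrow> 'v) \<Rightarrow> ('v \<Rightarrow> 'v) \<Rightarrow> quat set" where
  "S_resolvent_set rm T = UNIV - S_spectrum rm T"

definition S_resolvent :: "(quat \<Rightarrow> 'v::real_normed_vector \<Rightarrow> 'v) \<Rightarrow> quat \<Rightarrow> ('v \<Rightarrow> 'v) \<Rightarrow> 'v \<Rightarrow> 'v" where
  "S_resolvent lm s T = (\<lambda>v. - (inv (Qop s T)) (T v - lm (qcnj s) v))"

end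

theory Submission
  imports Defs
begin

lemma of_real_quat: "(of_real r::quat) = Quat r 0 0 0"
  by (simp add: of_real_def scaleR_quat_def one_quat_def)

lemma of_real_quat_commute: "(of_real r::quat) * x = x * of_real r"
  by (simp add: of_real_quat times_quat_def quat_eq_iff)

lemma quat_imag_sq:
  assumes "qRe b = 0"
  shows "b * b = (of_real (- (norm b)\<^sup>2) :: quat)"
  using assms by (simp add: of_real_quat times_quat_def quat_eq_iff norm_quat_def power2_eq_square)

lemma qcnj_decomp: "qcnj s = of_real (qRe s) - (s - of_real (qRe s))"
  by (simp add: qcnj_def of_real_quat quat_eq_iff)

lemma qnorm_sq_decomp: "(norm s)\<^sup>2 = (qRe s)\<^sup>2 + (norm (s - of_real (qRe s)))\<^sup>2"
  by (simp add: norm_quat_def of_real_quat)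

lemma qRe_imag: "qRe (s - of_real (qRe s)) = 0"
  by (simp add: of_real_quat)

locale bq =
  fixes lm :: "quat \<Rightarrow> 'v::banach \<Rightarrow> 'v" and rm :: "'v \<Rightarrow> quat \<Rightarrow> 'v"
  assumes B: "bilateral_qbanach lm rm"
begin

lemma lm_add_left: "lm (x + y) v = lm x v + lm y v"
  using B by (simp add: bilateral_qbanach_def)
lemma lm_add_right: "lm x (v + w) = lm x v + lm x w"
  using B by (simp add: bilateral_qbanach_def)
lemma lm_mult: "lm (x * y) v = lm x (lm y v)"
  using B by (simp add: bilateral_qbanach_def)
lemma lm_of_real: "lm (of_real r) v = r *\<^sub>R v"
  using B by (simp add: bilateral_qbanach_def)
lemma lm_norm: "norm (lm x v) = norm x * norm v"
  using B by (simp add: bilateral_qbanach_def)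

lemma lm_diff_left: "lm (x - y) v = lm x v - lm y v"
  using lm_add_left[of "x - y" y v] by (simp add: algebra_simps)

lemma lm_scale: "lm x (r *\<^sub>R v) = r *\<^sub>R lm x v"
proof -
  have "lm x (r *\<^sub>R v) = lm x (lm (of_real r) v)" by (simp add: lm_of_real)
  also have "\<dots> = lm (of_real r * x) v" by (simp add: lm_mult of_real_quat_commute)
  also have "\<dots> = r *\<^sub>R lm x v" by (simp add: lm_mult lm_of_real)
  finally show ?thesis .
qed

lemma bl_lm: "bounded_linear (lm x)"
  by (rule bounded_linear_intro[where K="norm x"]) (simp_all add: lm_add_right lm_scale lm_norm)

lemma onorm_lm: "onorm (lm x) \<le> norm x"
  by (rule onorm_bound) (simp_all add: lm_norm)

end


lemma funpow_bl: "bounded_linear (A::'a::real_normed_vector \<Rightarrow> 'a) \<Longrightarrow> bounded_linear (A ^^ n)"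
proof (induction n)
  case 0
  have "A ^^ 0 = (\<lambda>x. x)" by (rule ext) simp
  then show ?case by (simp only:) (rule bounded_linear_ident)
next
  case (Suc n) then show ?case using bounded_linear_compose[of A "A ^^ n"] by (simp add: o_def)
qed

lemma funpow_onorm: "bounded_linear (A::'a::real_normed_vector \<Rightarrow> 'a) \<Longrightarrow> onorm (A ^^ n) \<le> onorm A ^ n"
proof (induction n)
  case 0
  have "A ^^ 0 = (\<lambda>x. x)" by (rule ext) simp
  then show ?case using onorm_id_le by (metis power_0)
next
  case (Suc n)
  have "onorm (A ^^ Suc n) = onorm (A \<circ> A ^^ n)" by simp
  also have "\<dots> \<le> onorm A * onorm (A ^^ n)"
    by (rule onorm_compose) (use Suc funpow_bl in auto)
  also have "\<dots> \<le> onorm A * onorm A ^ n"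
    by (rule mult_left_mono) (use Suc onorm_pos_le in auto)
  finally show ?case by (simp only: power_Suc)
qed

theorem theorem4p11:
  fixes lm :: "quat \<Rightarrow> 'v::banach \<Rightarrow> 'v" and rm :: "'v \<Rightarrow> quat \<Rightarrow> 'v"
    and T :: "'v \<Rightarrow> 'v" and s :: quat
  assumes "bilateral_qbanach lm rm"
    and "qbop rm T"
    and "s \<in> S_resolvent_set rm T"
    and "onorm (\<lambda>v. T v - qRe s *\<^sub>R v) < norm (s - of_real (qRe s))"
  shows "(\<lambda>n. Blinfun (\<lambda>v. ((\<lambda>w. T w - qRe s *\<^sub>R w) ^^ n)
              (lm (inverse ((s - of_real (qRe s)) ^ Suc n)) v)))
           sums Blinfun (S_resolvent lm s T)"
proof -
  interpret bq lm rm using assms(1) by unfold_locales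
  define a where "a = qRe s"
  define b where "b = s - of_real a"
  define A where "A = (\<lambda>w. T w - a *\<^sub>R w)"
  define c where "c = (\<lambda>n. inverse (b ^ Suc n))"
  define r where "r = (norm b)\<^sup>2"
  define F where "F = (\<lambda>n. Blinfun (\<lambda>v. (A ^^ n) (lm (c n) v)))"
  have blT: "bounded_linear T" using assms(2) by (simp add: qbop_def)
  then have blA: "bounded_linear A" unfolding A_def
    by (intro bounded_linear_sub bounded_linear_scaleR_right bounded_linear_ident)
  have lT: "linear T" using blT bounded_linear.linear by blast
  have on: "onorm A < norm b" using assms(4) by (simp add: A_def a_def b_def of_real_quat)
  have onA0: "0 \<le> onorm A" using onorm_pos_le[OF blA] .
  have b0: "b \<noteq> 0" using on onA0 by auto
  have nb: "0 < norm b" using b0 by simp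
  have r0: "r > 0" using nb by (simp add: r_def)
  have bb: "b * b = of_real (- r)"
    unfolding r_def by (rule quat_imag_sq) (simp add: b_def a_def of_real_quat)
  have blF: "bounded_linear (\<lambda>v. (A ^^ n) (lm (c n) v))" for n
    using bounded_linear_compose[OF funpow_bl[OF blA] bl_lm] .
  have normF: "norm (F n) \<le> inverse (norm b) * (onorm A / norm b) ^ n" for n
  proof -
    have "norm (F n) = onorm ((A ^^ n) \<circ> lm (c n))"
      unfolding F_def norm_blinfun.rep_eq bounded_linear_Blinfun_apply[OF blF] by (simp add: o_def)
    also have "\<dots> \<le> onorm (A ^^ n) * onorm (lm (c n))"
      by (rule onorm_compose[OF funpow_bl[OF blA] bl_lm])
    also have "\<dots> \<le> onorm A ^ n * norm (c n)"
      by (rule mult_mono[OF funpow_onorm[OF blA] onorm_lm])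
         (auto intro: onorm_pos_le[OF bl_lm] simp: onA0)
    also have "norm (c n) = inverse (norm b) ^ Suc n"
      by (simp add: c_def norm_inverse norm_power power_inverse norm_mult del: power_Suc)
    also have "onorm A ^ n * inverse (norm b) ^ Suc n = inverse (norm b) * (onorm A / norm b) ^ n"
      by (simp add: power_divide field_simps)
    finally show ?thesis .
  qed
  have summ: "summable F"
  proof (rule summable_comparison_test)
    show "\<exists>N. \<forall>n\<ge>N. norm (F n) \<le> inverse (norm b) * (onorm A / norm b) ^ n"
      using normF by blast
    show "summable (\<lambda>n. inverse (norm b) * (onorm A / norm b) ^ n)"
      by (rule summable_mult, rule summable_geometric) (use on onA0 nb in auto)
  qed
  define L where "L = suminf F"
  have FL: "F sums L" using summ by (simp add: L_def summable_sums)
  define Q where "Q = Qop s T"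
  have Qeq: "Q x = A (A x) + r *\<^sub>R x" for x
  proof -
    have "(norm s)\<^sup>2 = a\<^sup>2 + r" using qnorm_sq_decomp[of s] by (simp add: a_def r_def b_def)
    moreover have "A (A x) = T (T x) - a *\<^sub>R T x - a *\<^sub>R T x + (a * a) *\<^sub>R x"
      by (simp add: A_def linear_diff[OF lT] linear_cmul[OF lT] scaleR_diff_right
          algebra_simps)
    ultimately show ?thesis
      using scaleR_add_left[of a a "T x"] by (simp add: Q_def Qop_def a_def power2_eq_square mult_2 algebra_simps)
  qed
  have blQ: "bounded_linear Q" unfolding Q_def Qop_def
    by (intro bounded_linear_add bounded_linear_sub bounded_linear_scaleR_right bounded_linear_ident
        bounded_linear_compose[OF blT blT] blT bounded_linear_compose[OF bounded_linear_scaleR_right blT])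
  have pointwise: "blinfun_apply L v = S_resolvent lm s T v" for v
  proof -
    define g where "g = (\<lambda>n. (A ^^ n) (lm (c n) v))"
    have gs: "g sums blinfun_apply L v"
      using bounded_linear.sums[OF bounded_bilinear.bounded_linear_left[OF bounded_bilinear_blinfun_apply, of v] FL]
      by (simp add: g_def F_def bounded_linear_Blinfun_apply[OF blF])
    have cc: "c n = of_real (- r) * c (Suc (Suc n))" for n
    proof -
      have bn: "b ^ Suc n \<noteq> 0" "b * b \<noteq> 0" using b0 by auto
      have "b ^ Suc (Suc (Suc n)) = b ^ Suc n * (b * b)"
        by (simp only: power_Suc2 mult.assoc)
      then have "c (Suc (Suc n)) = inverse (b * b) * c n"
        using bn by (simp add: c_def nonzero_inverse_mult_distrib del: power_Suc)
      then have "c n = (b * b) * c (Suc (Suc n))"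
        using bn by (simp add: mult.assoc[symmetric])
      then show ?thesis by (simp add: bb)
    qed
    have Qg: "Q (g n) = r *\<^sub>R (g n - g (Suc (Suc n)))" for n
    proof -
      have "A (A (g n)) = (A ^^ Suc (Suc n)) (lm (c n) v)"
        by (simp add: g_def)
      also have "\<dots> = (A ^^ Suc (Suc n)) ((- r) *\<^sub>R lm (c (Suc (Suc n))) v)"
        using cc[of n] lm_mult[of "of_real (- r)" "c (Suc (Suc n))" v] lm_of_real[of "- r"]
        by (simp only:)
      also have "\<dots> = (- r) *\<^sub>R g (Suc (Suc n))"
        by (simp only: g_def linear_cmul[OF bounded_linear.linear[OF funpow_bl[OF blA]]])
      finally show ?thesis by (simp add: Qeq algebra_simps)
    qed
    have gs2: "(\<lambda>n. g (n + 2)) sums (blinfun_apply L v - (g 0 + g 1))"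
      using gs sums_iff_shift[of g 2 "blinfun_apply L v - (g 0 + g 1)"]
      by (simp add: numeral_2_eq_2)
    have "(\<lambda>n. r *\<^sub>R (g n - g (Suc (Suc n)))) sums (r *\<^sub>R (g 0 + g 1))"
      using sums_scaleR_right[OF sums_diff[OF gs gs2], of r] by (simp add: numeral_2_eq_2 add.commute)
    moreover have "(\<lambda>n. Q (g n)) sums Q (blinfun_apply L v)"
      using bounded_linear.sums[OF blQ gs] .
    ultimately have QL: "Q (blinfun_apply L v) = r *\<^sub>R (g 0 + g 1)"
      using Qg sums_unique2 by fastforce
    have g0: "r *\<^sub>R g 0 = - lm b v"
    proof -
      have "of_real r * inverse b = - b"
        using b0 bb by (simp add: field_simps)
      then have "lm (of_real r) (lm (inverse b) v) = lm (- b) v" by (simp add: lm_mult[symmetric])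
      moreover have "lm (- b) v = - lm b v" using lm_diff_left[of 0 b v] lm_of_real[of 0 v] by simp
      ultimately show ?thesis by (simp add: g_def c_def lm_of_real)
    qed
    have g1: "r *\<^sub>R g 1 = - A v"
    proof -
      have "c 1 = inverse (b * b)" by (simp add: c_def)
      also have "\<dots> = inverse (of_real (- r))" by (simp only: bb)
      also have "\<dots> = of_real (inverse (- r))" by (rule of_real_inverse[symmetric])
      also have "\<dots> = of_real (- inverse r)" by simp
      finally have "lm (c 1) v = (- inverse r) *\<^sub>R v" by (simp only: lm_of_real)
      moreover have "g 1 = A (lm (c 1) v)" by (simp add: g_def)
      ultimately have "g 1 = (- inverse r) *\<^sub>R A v"
        by (simp only: linear_cmul[OF bounded_linear.linear[OF blA]])
      then show ?thesis using r0 by simp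
    qed
    have QL2: "Q (blinfun_apply L v) = - (A v + lm b v)"
      using QL g0 g1 by (simp add: scaleR_add_right)
    have TA: "T v - lm (qcnj s) v = A v + lm b v"
      by (simp add: qcnj_decomp A_def a_def[symmetric] b_def[symmetric] lm_diff_left lm_of_real)
    obtain Bi where Bi: "Bi \<circ> Q = id" using assms(3)
      by (auto simp: S_resolvent_set_def S_spectrum_def qinvertible_def Q_def)
    have injQ: "inj Q" using Bi by (metis inj_on_id inj_on_imageI2)
    have "Q (- blinfun_apply L v) = - Q (blinfun_apply L v)"
      using linear_neg[OF bounded_linear.linear[OF blQ]] by simp
    then have "inv Q (A v + lm b v) = - blinfun_apply L v"
      using QL2 injQ by (metis inv_f_f minus_minus)
    then show ?thesis
      by (simp add: S_resolvent_def TA Q_def[symmetric])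
  qed
  have "blinfun_apply L = S_resolvent lm s T" using pointwise by auto
  then have "Blinfun (S_resolvent lm s T) = L" by (metis blinfun_apply_inverse)
  then show ?thesis using FL by (simp add: F_def A_def c_def a_def b_def)
qed

end
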